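(* Let $q$ be a prime power, let $\mathcal{F}=(\mathcal{F}_1,\ldots,\mathcal{F}_r)$ be a flag on $\mathbb{F}_{q^n}$ and let $\beta\in\mathbb{F}_{q^n}^*$. The following are equivalent: (1) $\mathrm{Orb}_\beta(\mathcal{F})$ is a disjoint flag code; (2) $\mathrm{Stab}_\beta(\mathcal{F})=\mathrm{Stab}_\beta(\mathcal{F}_1)=\cdots=\mathrm{Stab}_\beta(\mathcal{F}_r)$; (3) $\mathrm{Stab}_\beta(\mathcal{F}_1)=\cdots=\mathrm{Stab}_\beta(\mathcal{F}_r)$.
   Context: A flag on $\mathbb{F}_{q^n}$ is a sequence $(\mathcal{F}_1,\ldots,\mathcal{F}_r)$ of $\mathbb{F}_q$-subspaces with $\{0\}\subsetneq\mathcal{F}_1\subsetneq\cdots\subsetneq\mathcal{F}_r\subsetneq\mathbb{F}_{q^n}$. For $\beta\in\mathbb{F}_{q^n}^*$ of multiplicative order $|\beta|$, $\mathcal{U}\beta=\{u\beta:u\in\mathcal{U}\}$, $\mathcal{F}\beta=(\mathcal{F}_1\beta,\ldots,\mathcal{F}_r\beta)$, $\mathrm{Orb}_\beta(\mathcal{F})=\{\mathcal{F}\beta^j:0\le j\le|\beta|-1\}$, $\mathrm{Stab}_\beta(\mathcal{U})=\{\gamma\in\langle\beta\rangle:\mathcal{U}\gamma=\mathcal{U}\}$ and $\mathrm{Stab}_\beta(\mathcal{F})=\{\gamma\in\langle\beta\rangle:\mathcal{F}\gamma=\mathcal{F}\}$. For a set $\mathcal{C}$ of flags of type $(t_1,\ldots,t_r)$,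 its $i$-th projected code $\mathcal{C}_i$ is the set of $i$-th subspaces of its flags; $\mathcal{C}$ is disjoint if $|\mathcal{C}_1|=\cdots=|\mathcal{C}_r|=|\mathcal{C}|$. *)

theory Defs
  imports "HOL-Computational_Algebra.Primes"
begin

text \<open>The ambient field is a finite field type 'a with q^n elements; its subfield
  F_q is the set of elements fixed by the Frobenius x \<mapsto> x^q.\<close>

definition prime_power :: "nat \<Rightarrow> bool" where
  "prime_power q \<longleftrightarrow> (\<exists>p k. prime p \<and> k > 0 \<and> q = p ^ k)"

definition subfield_Fq :: "nat \<Rightarrow> 'a::field set" where
  "subfield_Fq q = {x. x ^ q = x}"

definition Fq_subspace :: "nat \<Rightarrow> 'a::field set \<Rightarrow> bool" where
  "Fq_subspace q U \<longleftrightarrow> 0 \<in> U \<and> (\<forall>u\<in>U. \<forall>v\<in>U. u + v \<in> U)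
     \<and> (\<forall>c\<in>subfield_Fq q. \<forall>u\<in>U. c * u \<in> U)"

text \<open>A flag (F_1,...,F_r), r \<ge> 1, is a list; F_i is  F ! (i-1).\<close>
definition is_flag :: "nat \<Rightarrow> 'a::field set list \<Rightarrow> bool" where
  "is_flag q F \<longleftrightarrow> F \<noteq> [] \<and> (\<forall>i<length F. Fq_subspace q (F ! i))
     \<and> {0} \<subset> F ! 0
     \<and> (\<forall>i. Suc i < length F \<longrightarrow> F ! i \<subset> F ! Suc i)
     \<and> last F \<subset> UNIV"

definition mult_order :: "'a::field \<Rightarrow> nat" where
  "mult_order \<beta> = (LEAST k. k > 0 \<and> \<beta> ^ k = 1)"

definition cyc :: "'a::field \<Rightarrow> 'a set" where
  "cyc \<beta> = range (\<lambda>j::nat. \<beta> ^ j)"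

definition smul_set :: "'a::field set \<Rightarrow> 'a \<Rightarrow> 'a set" where
  "smul_set U \<gamma> = (\<lambda>u. u * \<gamma>) ` U"

definition smul_flag :: "'a::field set list \<Rightarrow> 'a \<Rightarrow> 'a set list" where
  "smul_flag F \<gamma> = map (\<lambda>U. smul_set U \<gamma>) F"

definition Orb :: "'a::field \<Rightarrow> 'a set list \<Rightarrow> 'a set list set" where
  "Orb \<beta> F = {smul_flag F (\<beta> ^ j) | j. j \<le> mult_order \<beta> - 1}"

definition Stab_set :: "'a::field \<Rightarrow> 'a set \<Rightarrow> 'a set" where
  "Stab_set \<beta> U = {\<gamma> \<in> cyc \<beta>. smul_set U \<gamma> = U}"

definition Stab_flag :: "'a::field \<Rightarrow> 'a set list \<Rightarrow> 'a set" where
  "Stab_flag \<beta> F = {\<gamma> \<in> cyc \<beta>. smul_flag F \<gamma> = F}"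

definition projected_code :: "'a set list set \<Rightarrow> nat \<Rightarrow> 'a set set" where
  "projected_code C i = (\<lambda>G. G ! i) ` C"

definition disjoint_flag_code :: "nat \<Rightarrow> 'a set list set \<Rightarrow> bool" where
  "disjoint_flag_code r C \<longleftrightarrow> (\<forall>i<r. card (projected_code C i) = card C)"

end

theory Submission
  imports Defs
begin

lemma smul_set_mult: "smul_set U (a*b) = smul_set (smul_set U a) b"
  unfolding smul_set_def by (auto simp: image_image mult.assoc)

lemma smul_set_one: "smul_set U 1 = U"
  unfolding smul_set_def by simp

lemma smul_set_cancel:
  assumes "(a::'a::field) \<noteq> 0" "smul_set U a = smul_set V a" shows "U = V"
proof -
  have "smul_set (smul_set U a) (inverse a) = smul_set (smul_set V a) (inverse a)"
    using assms by simp
  thus ?thesis using assms(1) by (simp add: smul_set_mult[symmetric] smul_set_one)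
qed

lemma smul_flag_nth: "i < length F \<Longrightarrow> smul_flag F g ! i = smul_set (F!i) g"
  unfolding smul_flag_def by simp

lemma smul_flag_eq_iff: "smul_flag F g = F \<longleftrightarrow> (\<forall>i<length F. smul_set (F!i) g = F!i)"
  unfolding smul_flag_def by (simp add: list_eq_iff_nth_eq)

lemma smul_flag_mult: "smul_flag F (a*b) = smul_flag (smul_flag F a) b"
  unfolding smul_flag_def by (simp add: smul_set_mult comp_def)

lemma smul_flag_one: "smul_flag F 1 = F"
  unfolding smul_flag_def by (simp add: smul_set_one)

lemma exists_order:
  fixes \<beta> :: "'a::{field,finite}"
  assumes "\<beta> \<noteq> 0" shows "\<exists>k>0. \<beta> ^ k = 1"
proof -
  have "\<not> inj (\<lambda>j::nat. \<beta> ^ j)"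
  proof
    assume "inj (\<lambda>j::nat. \<beta> ^ j)"
    hence "infinite (range (\<lambda>j::nat. \<beta> ^ j))"
      using finite_imageD infinite_UNIV_nat by blast
    thus False by simp
  qed
  then obtain a b :: nat where ab: "a \<noteq> b" "\<beta> ^ a = \<beta> ^ b" unfolding inj_def by blast
  have "\<exists>a b::nat. a < b \<and> \<beta> ^ a = \<beta> ^ b"
    using ab by (metis linorder_neqE_nat)
  then obtain a b :: nat where ab: "a < b" "\<beta> ^ a = \<beta> ^ b" by blast
  have "\<beta> ^ b = \<beta> ^ a * \<beta> ^ (b - a)" using ab(1) by (simp add: power_add[symmetric])
  hence "\<beta> ^ a * 1 = \<beta> ^ a * \<beta> ^ (b - a)" using ab by simp
  hence "\<beta> ^ (b - a) = 1" using assms by (metis mult_left_cancel power_not_zero)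
  thus ?thesis using ab(1) by (intro exI[of _ "b-a"]) simp
qed

lemma order_props:
  fixes \<beta> :: "'a::{field,finite}"
  assumes "\<beta> \<noteq> 0" shows "mult_order \<beta> > 0 \<and> \<beta> ^ mult_order \<beta> = 1"
  unfolding mult_order_def using LeastI_ex[OF exists_order[OF assms]] by blast

lemma power_mod_order:
  fixes \<beta> :: "'a::field"
  assumes "\<beta> ^ m = 1" shows "\<beta> ^ k = \<beta> ^ (k mod m)"
proof -
  have "\<beta> ^ k = \<beta> ^ (m * (k div m) + k mod m)" by simp
  also have "\<dots> = (\<beta> ^ m) ^ (k div m) * \<beta> ^ (k mod m)"
    by (simp only: power_add power_mult)
  finally show ?thesis using assms by simp
qed

lemma Orb_image: "Orb \<beta> F = (\<lambda>j. smul_flag F (\<beta> ^ j)) ` {..mult_order \<beta> - 1}"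
  unfolding Orb_def by auto

lemma inj_iff:
  fixes \<beta> :: "'a::{field,finite}"
  assumes b: "\<beta> \<noteq> 0" and i: "i < length F"
  shows "inj_on (\<lambda>G. G!i) (Orb \<beta> F) \<longleftrightarrow> Stab_set \<beta> (F!i) \<subseteq> Stab_flag \<beta> F"
proof
  assume inj: "inj_on (\<lambda>G. G!i) (Orb \<beta> F)"
  define m where "m = mult_order \<beta>"
  have m: "m > 0" "\<beta> ^ m = 1" using order_props[OF b] m_def by auto
  show "Stab_set \<beta> (F!i) \<subseteq> Stab_flag \<beta> F"
  proof
    fix g assume g: "g \<in> Stab_set \<beta> (F!i)"
    then obtain k where k: "g = \<beta> ^ k" and gi: "smul_set (F!i) g = F!i"
      unfolding Stab_set_def cyc_def by auto
    have gk: "g = \<beta> ^ (k mod m)" using k power_mod_order[OF m(2)] by simp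
    have "k mod m \<le> m - 1" using m(1) mod_less_divisor[of m k] by linarith
    hence o1: "smul_flag F g \<in> Orb \<beta> F" unfolding Orb_def m_def[symmetric] using gk by blast
    have o2: "F \<in> Orb \<beta> F" unfolding Orb_def using smul_flag_one[of F]
      by (intro CollectI exI[of _ 0]) simp
    have "smul_flag F g ! i = F ! i" using gi i by (simp add: smul_flag_nth)
    hence "smul_flag F g = F" using inj_onD[OF inj _ o1 o2] by simp
    thus "g \<in> Stab_flag \<beta> F" using g unfolding Stab_flag_def Stab_set_def by auto
  qed
next
  assume sub: "Stab_set \<beta> (F!i) \<subseteq> Stab_flag \<beta> F"
  have key: "smul_flag F (\<beta>^j) = smul_flag F (\<beta>^k)"
    if "j \<le> k" "smul_set (F!i) (\<beta>^j) = smul_set (F!i) (\<beta>^k)" for j k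
  proof -
    have bk: "\<beta>^k = \<beta>^(k-j) * \<beta>^j" using that(1) by (simp add: power_add[symmetric])
    have "smul_set (F!i) (\<beta>^j) = smul_set (smul_set (F!i) (\<beta>^(k-j))) (\<beta>^j)"
      using that(2) bk by (simp add: smul_set_mult)
    hence "F!i = smul_set (F!i) (\<beta>^(k-j))" using smul_set_cancel b by (metis power_not_zero)
    hence "\<beta>^(k-j) \<in> Stab_set \<beta> (F!i)" unfolding Stab_set_def cyc_def by auto
    hence "smul_flag F (\<beta>^(k-j)) = F" using sub unfolding Stab_flag_def by auto
    thus ?thesis using bk by (metis smul_flag_mult)
  qed
  show "inj_on (\<lambda>G. G!i) (Orb \<beta> F)"
  proof (rule inj_onI)
    fix x y assume "x \<in> Orb \<beta> F" "y \<in> Orb \<beta> F" and xy: "x!i = y!i"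
    then obtain j k where x: "x = smul_flag F (\<beta>^j)" and y: "y = smul_flag F (\<beta>^k)"
      unfolding Orb_def by auto
    have e: "smul_set (F!i) (\<beta>^j) = smul_set (F!i) (\<beta>^k)"
      using xy x y i by (simp add: smul_flag_nth)
    show "x = y"
    proof (cases "j \<le> k")
      case True thus ?thesis using key e x y by simp
    next
      case False thus ?thesis using key[of k j] e x y by simp
    qed
  qed
qed

theorem proposition4p18:
  fixes q n :: nat and F :: "'a::{field,finite} set list" and \<beta> :: 'a
  assumes "prime_power q" and "n \<ge> 1" and "card (UNIV :: 'a set) = q ^ n"
    and "is_flag q F" and "\<beta> \<noteq> 0"
  shows "(disjoint_flag_code (length F) (Orb \<beta> F)
            \<longleftrightarrow> (\<forall>i<length F. Stab_flag \<beta> F = Stab_set \<beta> (F ! i)))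
       \<and> ((\<forall>i<length F. Stab_flag \<beta> F = Stab_set \<beta> (F ! i))
            \<longleftrightarrow> (\<forall>i<length F. Stab_set \<beta> (F ! i) = Stab_set \<beta> (F ! 0)))"
proof -
  have ne: "length F > 0" using assms(4) unfolding is_flag_def by simp
  have Sf: "Stab_flag \<beta> F = {g \<in> cyc \<beta>. \<forall>i<length F. g \<in> Stab_set \<beta> (F!i)}"
    unfolding Stab_flag_def Stab_set_def using smul_flag_eq_iff by blast
  have fin: "finite (Orb \<beta> F)" unfolding Orb_image by simp
  have d: "disjoint_flag_code (length F) (Orb \<beta> F)
       \<longleftrightarrow> (\<forall>i<length F. inj_on (\<lambda>G. G!i) (Orb \<beta> F))"
    unfolding disjoint_flag_code_def projected_code_def
    using fin by (meson card_image eq_card_imp_inj_on)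
  have 1: "disjoint_flag_code (length F) (Orb \<beta> F)
            \<longleftrightarrow> (\<forall>i<length F. Stab_flag \<beta> F = Stab_set \<beta> (F ! i))"
    unfolding d using inj_iff[OF assms(5)] Sf unfolding Stab_set_def by blast
  have 2: "(\<forall>i<length F. Stab_flag \<beta> F = Stab_set \<beta> (F ! i))
            \<longleftrightarrow> (\<forall>i<length F. Stab_set \<beta> (F ! i) = Stab_set \<beta> (F ! 0))"
  proof
    assume "\<forall>i<length F. Stab_flag \<beta> F = Stab_set \<beta> (F ! i)"
    thus "\<forall>i<length F. Stab_set \<beta> (F ! i) = Stab_set \<beta> (F ! 0)" using ne by metis
  next
    assume h: "\<forall>i<length F. Stab_set \<beta> (F ! i) = Stab_set \<beta> (F ! 0)"
    hence "Stab_flag \<beta> F = Stab_set \<beta> (F ! 0)" unfolding Sf using ne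
      unfolding Stab_set_def by blast
    thus "\<forall>i<length F. Stab_flag \<beta> F = Stab_set \<beta> (F ! i)" using h by simp
  qed
  show ?thesis using 1 2 by blast
qed

end
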